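(* For every $n\ge1$ and every choice of coefficients there exist real polynomials $\alpha,\beta,\gamma,\delta$ in $h$ with $\deg\alpha,\deg\delta\le[\frac{n-1}{2}]$, $\deg\beta\le[\frac{n-2}{2}]$, $\deg\gamma\le[\frac n2]$, and a real polynomial $\phi$ of degree at most $2n+\frac{3+(-1)^n}{2}$, such that for all $h\in(0,+\infty)$, $$M(h)=\alpha(h)I_{0,1}(h)+\beta(h)I_{1,1}(h)+\gamma(h)J_{0,0}(h)+\delta(h)J_{0,1}(h)+\phi\big(u(h)\big).$$ (Here a polynomial of negative degree bound is the zero polynomial.)
   Context: Fix an integer $n\ge 1$ and real coefficients $a^k_{i,j},b^k_{i,j}$ ($k=1,2,3,4$; $i+j\le n$), $f_k=\sum_{0\le i+j\le n}a^k_{i,j}x^iy^j$, $g_k=\sum_{0\le i+j\le n}b^k_{i,j}x^iy^j$. For $h>0$ let $u(h)=\sqrt{(\sqrt{1+4h}-1)/2}$ (so $u^4+u^2=h$), $\Gamma_h$ the circle $x^2+y^2=h$, and $A=(u,u^2)$, $B=(u,-u^2)$, $C=(-u,-u^2)$, $D=(-u,u^2)$. Let $\widehat{AB},\widehat{BC},\widehat{CD},\widehat{DA}$ be the arcs of $\Gamma_h$ traversed clockwise from $A$ to $B$ (through $(\sqrt h,0)$), $B$ to $C$ (through $(0,-\sqrt h)$), $C$ to $D$ (through $(-\sqrt h,0)$), $D$ to $A$ (through $(0,\sqrt h)$). Define $$M(h)=\int_{\widehat{AB}}g_1dx-f_1dy+\int_{\widehat{BC}}g_2dx-f_2dy+\int_{\widehat{CD}}g_3dx-f_3dy+\int_{\widehat{DA}}g_4dx-f_4dy.$$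 For integers $i,j\ge0$, $I_{i,j}(h)=\int_{\widehat{AB}}x^iy^jdx$, $J_{i,j}(h)=\int_{\widehat{BC}}x^iy^jdx$. $[p]$ is the integer part of $p$. *)

theory Defs
  imports "HOL-Analysis.Analysis" "HOL-Computational_Algebra.Polynomial"
begin

text \<open>u(h) = sqrt((sqrt(1+4h)-1)/2), so that u^4 + u^2 = h.\<close>
definition uu :: "real \<Rightarrow> real" where
  "uu h = sqrt ((sqrt (1 + 4 * h) - 1) / 2)"

definition bipoly :: "nat \<Rightarrow> (nat \<Rightarrow> nat \<Rightarrow> real) \<Rightarrow> real \<Rightarrow> real \<Rightarrow> real" where
  "bipoly n c x y = (\<Sum>(i,j)\<in>{(i,j). i + j \<le> n}. c i j * x ^ i * y ^ j)"

text \<open>The point A=(u,u^2) corresponds to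
  t = - arctan u, B=(u,-u^2) to t = arctan u, C=(-u,-u^2) to t = pi - arctan u,
  D=(-u,u^2) to t = pi + arctan u (equivalently A again at 2 pi - arctan u).\<close>
definition cw :: "real \<Rightarrow> real \<Rightarrow> real \<times> real" where
  "cw h t = (sqrt h * cos t, - (sqrt h * sin t))"

definition thA :: "real \<Rightarrow> real" where
  "thA h = arctan (uu h)"

definition arc_int :: "real \<Rightarrow> real \<Rightarrow> real \<Rightarrow> (real \<Rightarrow> real \<Rightarrow> real) \<Rightarrow> (real \<Rightarrow> real \<Rightarrow> real) \<Rightarrow> real" where
  "arc_int h a b P Q = integral {a..b} (\<lambda>t.
      P (fst (cw h t)) (snd (cw h t)) * (- (sqrt h * sin t))
    + Q (fst (cw h t)) (snd (cw h t)) * (- (sqrt h * cos t)))"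

definition arcAB where "arcAB h P Q = arc_int h (- thA h) (thA h) P Q"
definition arcBC where "arcBC h P Q = arc_int h (thA h) (pi - thA h) P Q"
definition arcCD where "arcCD h P Q = arc_int h (pi - thA h) (pi + thA h) P Q"
definition arcDA where "arcDA h P Q = arc_int h (pi + thA h) (2 * pi - thA h) P Q"

text \<open>M(h) with coefficients a k i j, b k i j of f_k, g_k (k = 1..4).\<close>
definition Mfun :: "nat \<Rightarrow> (nat \<Rightarrow> nat \<Rightarrow> nat \<Rightarrow> real) \<Rightarrow> (nat \<Rightarrow> nat \<Rightarrow> nat \<Rightarrow> real) \<Rightarrow> real \<Rightarrow> real" where
  "Mfun n a b h =
     arcAB h (\<lambda>x y. bipoly n (b 1) x y) (\<lambda>x y. - bipoly n (a 1) x y)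
   + arcBC h (\<lambda>x y. bipoly n (b 2) x y) (\<lambda>x y. - bipoly n (a 2) x y)
   + arcCD h (\<lambda>x y. bipoly n (b 3) x y) (\<lambda>x y. - bipoly n (a 3) x y)
   + arcDA h (\<lambda>x y. bipoly n (b 4) x y) (\<lambda>x y. - bipoly n (a 4) x y)"

definition Iint :: "nat \<Rightarrow> nat \<Rightarrow> real \<Rightarrow> real" where
  "Iint i j h = arcAB h (\<lambda>x y. x ^ i * y ^ j) (\<lambda>x y. 0)"

definition Jint :: "nat \<Rightarrow> nat \<Rightarrow> real \<Rightarrow> real" where
  "Jint i j h = arcBC h (\<lambda>x y. x ^ i * y ^ j) (\<lambda>x y. 0)"

definition deg_le :: "real poly \<Rightarrow> int \<Rightarrow> bool" where
  "deg_le p d \<longleftrightarrow> p = 0 \<or> int (degree p) \<le> d"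

end

theory Submission
  imports Defs
begin

definition XX :: "real \<Rightarrow> real \<Rightarrow> real" where "XX h t = sqrt h * cos t"
definition YY :: "real \<Rightarrow> real \<Rightarrow> real" where "YY h t = - (sqrt h * sin t)"

lemma XX_deriv: "((XX h) has_real_derivative YY h t) (at t)"
  unfolding XX_def YY_def by (auto intro!: derivative_eq_intros)
lemma YY_deriv: "((YY h) has_real_derivative - XX h t) (at t)"
  unfolding XX_def YY_def by (auto intro!: derivative_eq_intros)
lemma XY_circ: "h \<ge> 0 \<Longrightarrow> XX h t ^ 2 + YY h t ^ 2 = h"
  unfolding XX_def YY_def by (simp add: power_mult_distrib flip: distrib_left)

lemma mon_deriv:
  "((\<lambda>t. XX h t ^ Suc p * YY h t ^ Suc q) has_real_derivative
     (real (Suc p) * XX h t ^ p * YY h t ^ (q+2) - real (Suc q) * XX h t ^ (p+2) * YY h t ^ q)) (at t)"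
proof -
  have "((\<lambda>t. XX h t ^ Suc p * YY h t ^ Suc q) has_real_derivative
     ((1 + of_nat p) * (YY h t * XX h t ^ p)) * YY h t ^ Suc q + ((1 + of_nat q) * (- XX h t * YY h t ^ q)) * XX h t ^ Suc p) (at t)"
    by (intro DERIV_mult DERIV_power_Suc XX_deriv YY_deriv)
  then show ?thesis by (simp add: algebra_simps power2_eq_square)
qed

lemma uu_pos: "h > 0 \<Longrightarrow> uu h > 0"
  unfolding uu_def by (auto intro!: real_sqrt_gt_zero simp: real_less_rsqrt)

lemma uu_h: "h > 0 \<Longrightarrow> uu h ^ 4 + uu h ^ 2 = h"
proof -
  assume h: "h > 0"
  have s: "sqrt (1 + 4*h) ^ 2 = 1 + 4 * h" using h by simp
  have g: "sqrt (1+4*h) \<ge> 1" using h by (simp add: real_le_rsqrt)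
  have u2: "uu h ^ 2 = (sqrt (1 + 4 * h) - 1) / 2" unfolding uu_def using g by simp
  have "uu h ^ 4 + uu h ^ 2 = (uu h ^ 2)^2 + uu h ^ 2" by simp
  also have "\<dots> = ((sqrt (1 + 4 * h))^2 - 1) / 4" unfolding u2 by (simp add: power2_eq_square field_simps)
  finally show ?thesis using s by simp
qed


lemma sqrt_h: "h > 0 \<Longrightarrow> sqrt h = uu h * sqrt (1 + (uu h)^2)"
proof -
  assume h: "h > 0"
  have "h = (uu h)^2 * (1 + (uu h)^2)" using uu_h[OF h] by (simp add: algebra_simps power_add[symmetric] flip: power_mult)
  then have "sqrt h = sqrt ((uu h)^2) * sqrt (1 + (uu h)^2)" by (metis real_sqrt_mult)
  then show ?thesis using uu_pos[OF h] by simp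
qed

lemma one_sq_ne: "(1::real) + x^2 \<noteq> 0" "(1::real) + x * x \<noteq> 0"
  by (smt (verit) zero_le_power2, smt (verit) zero_le_square)

lemma cos_thA: "h > 0 \<Longrightarrow> sqrt h * cos (thA h) = uu h"
  unfolding thA_def cos_arctan using sqrt_h[of h]
  by (simp add: add_pos_nonneg one_sq_ne)
lemma sin_thA: "h > 0 \<Longrightarrow> sqrt h * sin (thA h) = (uu h)^2"
  unfolding thA_def sin_arctan using sqrt_h[of h]
  by (simp add: add_pos_nonneg power2_eq_square one_sq_ne)

lemma thA_bounds: "h > 0 \<Longrightarrow> 0 < thA h \<and> thA h < pi / 2"
  unfolding thA_def using uu_pos[of h] arctan_ubound[of "uu h"] by (simp add: arctan_less_zero_iff)

lemma endpts:
  assumes h: "h > 0"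
  shows "XX h (- thA h) = uu h" "YY h (- thA h) = (uu h)^2"
    "XX h (thA h) = uu h" "YY h (thA h) = - ((uu h)^2)"
    "XX h (pi - thA h) = - uu h" "YY h (pi - thA h) = - ((uu h)^2)"
    "XX h (pi + thA h) = - uu h" "YY h (pi + thA h) = (uu h)^2"
    "XX h (2*pi - thA h) = uu h" "YY h (2*pi - thA h) = (uu h)^2"
  using cos_thA[OF h] sin_thA[OF h] unfolding XX_def YY_def
  by (simp_all add: sin_diff cos_diff sin_add cos_add)


lemma deg_le_0[simp]: "deg_le 0 d" by (simp add: deg_le_def)
lemma deg_le_mono: "deg_le p d \<Longrightarrow> d \<le> e \<Longrightarrow> deg_le p e" by (auto simp: deg_le_def)
lemma deg_le_add: "deg_le p d \<Longrightarrow> deg_le q d \<Longrightarrow> deg_le (p + q) d"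
  unfolding deg_le_def using degree_add_le[of p "nat d" q]
  by (metis add_cancel_left_left add_cancel_right_right int_ops(1) le_nat_iff nat_int_add of_nat_0_le_iff order_trans)
lemma deg_le_smult: "deg_le p d \<Longrightarrow> deg_le (smult c p) d"
  unfolding deg_le_def by auto
lemma deg_le_uminus: "deg_le p d \<Longrightarrow> deg_le (- p) d"
  unfolding deg_le_def by auto
lemma deg_le_diff: "deg_le p d \<Longrightarrow> deg_le q d \<Longrightarrow> deg_le (p - q) d"
  using deg_le_add[of p d "-q"] deg_le_uminus[of q d] by simp
lemma deg_le_mult: "deg_le p d \<Longrightarrow> deg_le q e \<Longrightarrow> deg_le (p * q) (d + e)"
  unfolding deg_le_def using degree_mult_le[of p q] by fastforce
lemma deg_le_monom: "int k \<le> d \<Longrightarrow> deg_le (monom c k) d"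
  unfolding deg_le_def by (cases "c = 0") (auto simp: degree_monom_eq)
lemma deg_le_sum: "finite S \<Longrightarrow> (\<And>i. i \<in> S \<Longrightarrow> deg_le (f i) d) \<Longrightarrow> deg_le (\<Sum>i\<in>S. f i) d"
  by (induction S rule: finite_induct) (auto intro: deg_le_add)

definition hpoly :: "real poly" where "hpoly = [:0,0,1,0,1:]"
lemma hpoly_val: "h > 0 \<Longrightarrow> poly hpoly (uu h) = h"
  using uu_h[of h] unfolding hpoly_def by (simp add: algebra_simps power2_eq_square power4_eq_xxxx)
lemma hpoly_deg: "deg_le hpoly 4"
  unfolding deg_le_def hpoly_def by simp

definition Dm :: "nat \<Rightarrow> int" where "Dm m = 2 * int m - (if even m then 1 else 0)"

definition good :: "nat \<Rightarrow> (real \<Rightarrow> real \<Rightarrow> real) \<Rightarrow> bool" where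
"good m G \<longleftrightarrow> (\<exists>R. \<forall>s1 s2. (s1 = 1 \<or> s1 = -1) \<longrightarrow> (s2 = 1 \<or> s2 = -1) \<longrightarrow>
   (\<exists>Q. deg_le Q (Dm m) \<and> (\<forall>h t. h > 0 \<longrightarrow> XX h t = s1 * uu h \<longrightarrow> YY h t = s2 * (uu h)^2 \<longrightarrow>
      G h t = R h + poly Q (uu h))))"

definition Lprop :: "nat \<Rightarrow> nat \<Rightarrow> bool" where
"Lprop a b \<longleftrightarrow> (\<exists>c G. (odd (a+b) \<longrightarrow> c = 0) \<and>
   (\<forall>h t. h \<ge> 0 \<longrightarrow> ((G h) has_real_derivative (XX h t ^ a * YY h t ^ b - c * h ^ ((a+b) div 2))) (at t))
   \<and> good (a+b) G)"

lemma mon_val: "XX h t = s1 * u \<Longrightarrow> YY h t = s2 * u^2 \<Longrightarrow>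
   XX h t ^ p * YY h t ^ q = poly (monom (s1^p * s2^q) (p + 2*q)) u"
  by (simp add: poly_monom power_mult_distrib power_add power_mult)

lemma sgn_sq: "s = 1 \<or> s = (-1::real) \<Longrightarrow> s^2 = 1" by auto

lemma L00: "Lprop 0 0"
  unfolding Lprop_def good_def
  by (rule exI[of _ 1], rule exI[of _ "\<lambda>h t. 0"]) (auto intro!: exI[of _ "\<lambda>h. 0"] exI[of _ 0])

lemma L10: "Lprop 1 0"
  unfolding Lprop_def good_def
proof (rule exI[of _ 0], rule exI[of _ "\<lambda>h t. - YY h t"], intro conjI allI impI)
  fix h t :: real
  show "((\<lambda>t. - YY h t) has_real_derivative XX h t ^ 1 * YY h t ^ 0 - 0 * h ^ ((1 + 0) div 2)) (at t)"
    using DERIV_minus[OF YY_deriv] by simp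
next
  show "\<exists>R. \<forall>s1 s2. (s1 = 1 \<or> s1 = -1) \<longrightarrow> (s2 = 1 \<or> s2 = -1) \<longrightarrow>
   (\<exists>Q. deg_le Q (Dm (1+0)) \<and> (\<forall>h t. h > 0 \<longrightarrow> XX h t = s1 * uu h \<longrightarrow> YY h t = s2 * (uu h)^2 \<longrightarrow>
      - YY h t = R h + poly Q (uu h)))"
  proof (intro exI[of _ "\<lambda>h. 0"] allI impI)
    fix s1 s2 :: real
    show "\<exists>Q. deg_le Q (Dm (1+0)) \<and> (\<forall>h t. h > 0 \<longrightarrow> XX h t = s1 * uu h \<longrightarrow> YY h t = s2 * (uu h)^2 \<longrightarrow>
      - YY h t = 0 + poly Q (uu h))"
      by (intro exI[of _ "monom (-s2) 2"] conjI) (auto simp: Dm_def poly_monom intro!: deg_le_monom)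
  qed
qed simp

lemma L01: "Lprop 0 1"
  unfolding Lprop_def good_def
proof (rule exI[of _ 0], rule exI[of _ "\<lambda>h t. XX h t"], intro conjI allI impI)
  fix h t :: real
  show "((\<lambda>t. XX h t) has_real_derivative XX h t ^ 0 * YY h t ^ 1 - 0 * h ^ ((0 + 1) div 2)) (at t)"
    using XX_deriv by simp
next
  show "\<exists>R. \<forall>s1 s2. (s1 = 1 \<or> s1 = -1) \<longrightarrow> (s2 = 1 \<or> s2 = -1) \<longrightarrow>
   (\<exists>Q. deg_le Q (Dm (0+1)) \<and> (\<forall>h t. h > 0 \<longrightarrow> XX h t = s1 * uu h \<longrightarrow> YY h t = s2 * (uu h)^2 \<longrightarrow>
      XX h t = R h + poly Q (uu h)))"
  proof (intro exI[of _ "\<lambda>h. 0"] allI impI)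
    fix s1 s2 :: real
    show "\<exists>Q. deg_le Q (Dm (0+1)) \<and> (\<forall>h t. h > 0 \<longrightarrow> XX h t = s1 * uu h \<longrightarrow> YY h t = s2 * (uu h)^2 \<longrightarrow>
      XX h t = 0 + poly Q (uu h))"
      by (intro exI[of _ "monom s1 1"] conjI) (auto simp: Dm_def poly_monom intro!: deg_le_monom)
  qed
qed simp

lemma L11: "Lprop 1 1"
  unfolding Lprop_def good_def
proof (rule exI[of _ 0], rule exI[of _ "\<lambda>h t. XX h t ^ 2 / 2"], intro conjI allI impI)
  fix h t :: real
  show "((\<lambda>t. XX h t ^ 2 / 2) has_real_derivative XX h t ^ 1 * YY h t ^ 1 - 0 * h ^ ((1 + 1) div 2)) (at t)"
    using DERIV_cdivide[OF DERIV_power[OF XX_deriv[of h t], of 2], of 2] by (simp add: mult.commute)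
next
  show "\<exists>R. \<forall>s1 s2. (s1 = 1 \<or> s1 = -1) \<longrightarrow> (s2 = 1 \<or> s2 = -1) \<longrightarrow>
   (\<exists>Q. deg_le Q (Dm (1+1)) \<and> (\<forall>h t. h > 0 \<longrightarrow> XX h t = s1 * uu h \<longrightarrow> YY h t = s2 * (uu h)^2 \<longrightarrow>
      XX h t ^ 2 / 2 = R h + poly Q (uu h)))"
    by (intro exI[of _ "\<lambda>h. 0"] allI impI exI[of _ "monom (1/2) 2"] conjI)
       (auto simp: Dm_def poly_monom power_mult_distrib intro!: deg_le_monom)
qed simp


lemma alg_z: "m = real a + real b + 2 \<Longrightarrow>
  (real (Suc a) * (z * w) - real (Suc b) * (z * (h - w))) / m
   + (real (Suc b) / m) * h * (z - c0 * hk)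
  = z * w - (real (Suc b) * c0 / m) * (h * hk)"
  for z w h c0 hk m :: real
proof -
  assume m: "m = real a + real b + 2"
  have mne: "m \<noteq> 0" using m by simp
  show ?thesis using mne
    by (simp add: field_simps) (simp add: m algebra_simps)
qed

lemma alg_z2: "m = real a + real b + 2 \<Longrightarrow>
  (real (Suc a) / m) * h * (z - c0 * hk)
   - (real (Suc a) * (z * (h - w)) - real (Suc b) * (z * w)) / m
  = z * w - (real (Suc a) * c0 / m) * (h * hk)"
  for z w h c0 hk m :: real
proof -
  assume m: "m = real a + real b + 2"
  have mne: "m \<noteq> 0" using m by simp
  show ?thesis using mne
    by (simp add: field_simps) (simp add: m algebra_simps)
qed

lemma Dm_step: "Dm (m + 2) = Dm m + 4" unfolding Dm_def by auto

lemma L_step_b: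
  assumes "Lprop a b" shows "Lprop a (b+2)"
proof -
  from assms obtain c0 G0 where c0: "odd (a+b) \<longrightarrow> c0 = 0"
    and d0: "\<forall>h t. h \<ge> 0 \<longrightarrow> ((G0 h) has_real_derivative (XX h t ^ a * YY h t ^ b - c0 * h ^ ((a+b) div 2))) (at t)"
    and g0: "good (a+b) G0" unfolding Lprop_def by blast
  define m where "m = a + b + 2"
  define G where "G = (\<lambda>h t. (XX h t ^ Suc a * YY h t ^ Suc b) / real m + (real (Suc b) / real m) * h * G0 h t)"
  define c where "c = real (Suc b) * c0 / real m"
  have "odd (a + (b+2)) \<longrightarrow> c = 0" using c0 by (auto simp: c_def)
  moreover have "\<forall>h t. h \<ge> 0 \<longrightarrow> ((G h) has_real_derivative (XX h t ^ a * YY h t ^ (b+2) - c * h ^ ((a+(b+2)) div 2))) (at t)"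
  proof (intro allI impI)
    fix h t :: real assume h: "h \<ge> 0"
    have D: "((G h) has_real_derivative (real (Suc a) * XX h t ^ a * YY h t ^ (b+2) - real (Suc b) * XX h t ^ (a+2) * YY h t ^ b) / real m + (real (Suc b) / real m) * h * (XX h t ^ a * YY h t ^ b - c0 * h ^ ((a+b) div 2))) (at t)"
      unfolding G_def using d0 h by (intro DERIV_add DERIV_cdivide DERIV_cmult mon_deriv) auto
    have e1: "real (Suc a) * XX h t ^ a * YY h t ^ (b+2) = real (Suc a) * ((XX h t ^ a * YY h t ^ b) * YY h t ^ 2)"
      by (simp only: power_add mult.assoc)
    have e2: "real (Suc b) * XX h t ^ (a+2) * YY h t ^ b = real (Suc b) * ((XX h t ^ a * YY h t ^ b) * (h - YY h t ^ 2))"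
    proof -
      have x2: "XX h t ^ 2 = h - YY h t ^ 2" using XY_circ[OF h, of t] by linarith
      have e2a: "XX h t ^ (a+2) * YY h t ^ b = (XX h t ^ a * YY h t ^ b) * XX h t ^ 2" by (simp only: power_add mult_ac)
      show ?thesis using e2a unfolding x2 by (simp add: mult.assoc)
    qed
    have e3: "XX h t ^ a * YY h t ^ (b+2) = (XX h t ^ a * YY h t ^ b) * YY h t ^ 2"
      by (simp only: power_add mult.assoc)
    have hp: "h ^ ((a + (b+2)) div 2) = h * h ^ ((a+b) div 2)"
      by (simp add: power_Suc[symmetric] del: power_Suc)
    show "((G h) has_real_derivative (XX h t ^ a * YY h t ^ (b+2) - c * h ^ ((a+(b+2)) div 2))) (at t)"
    proof -
      have D': "((G h) has_real_derivative (real (Suc a) * ((XX h t ^ a * YY h t ^ b) * YY h t ^ 2) - real (Suc b) * ((XX h t ^ a * YY h t ^ b) * (h - YY h t ^ 2))) / real m + (real (Suc b) / real m) * h * (XX h t ^ a * YY h t ^ b - c0 * h ^ ((a+b) div 2))) (at t)"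
        using D unfolding e1 e2 .
      have eq: "(real (Suc a) * ((XX h t ^ a * YY h t ^ b) * YY h t ^ 2) - real (Suc b) * ((XX h t ^ a * YY h t ^ b) * (h - YY h t ^ 2))) / real m + (real (Suc b) / real m) * h * (XX h t ^ a * YY h t ^ b - c0 * h ^ ((a+b) div 2))
         = (XX h t ^ a * YY h t ^ b) * YY h t ^ 2 - (real (Suc b) * c0 / real m) * (h * h ^ ((a+b) div 2))"
        by (rule alg_z) (simp add: m_def)
      show ?thesis unfolding e3 hp c_def using D' unfolding eq .
    qed
  qed
  moreover have "good (a + (b+2)) G"
  proof -
    from g0 obtain R0 where R0: "\<forall>s1 s2. (s1 = 1 \<or> s1 = -1) \<longrightarrow> (s2 = 1 \<or> s2 = -1) \<longrightarrow>
      (\<exists>Q. deg_le Q (Dm (a+b)) \<and> (\<forall>h t. h > 0 \<longrightarrow> XX h t = s1 * uu h \<longrightarrow> YY h t = s2 * (uu h)^2 \<longrightarrow>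
      G0 h t = R0 h + poly Q (uu h)))" unfolding good_def by blast
    show ?thesis unfolding good_def
    proof (intro exI[of _ "\<lambda>h. (real (Suc b) / real m) * h * R0 h"] allI impI)
      fix s1 s2 :: real assume s1: "s1 = 1 \<or> s1 = -1" and s2: "s2 = 1 \<or> s2 = -1"
      from R0 s1 s2 obtain Q0 where Q0d: "deg_le Q0 (Dm (a+b))" and
        Q0: "\<forall>h t. h > 0 \<longrightarrow> XX h t = s1 * uu h \<longrightarrow> YY h t = s2 * (uu h)^2 \<longrightarrow> G0 h t = R0 h + poly Q0 (uu h)"
        by blast
      define Q where "Q = smult (1 / real m) (monom (s1^Suc a * s2^Suc b) (Suc a + 2 * Suc b)) + smult (real (Suc b) / real m) (hpoly * Q0)"
      have "deg_le Q (Dm (a + (b+2)))" unfolding Q_def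
        apply (intro deg_le_add deg_le_smult deg_le_monom)
         apply (simp add: Dm_def)
        using deg_le_mult[OF hpoly_deg Q0d] Dm_step[of "a+b"] by (simp add: add.commute add.left_commute)
      moreover have "\<forall>h t. h > 0 \<longrightarrow> XX h t = s1 * uu h \<longrightarrow> YY h t = s2 * (uu h)^2 \<longrightarrow>
          G h t = (real (Suc b) / real m) * h * R0 h + poly Q (uu h)"
      proof (intro allI impI)
        fix h t :: real assume h: "h > 0" and x: "XX h t = s1 * uu h" and y: "YY h t = s2 * (uu h)^2"
        show "G h t = (real (Suc b) / real m) * h * R0 h + poly Q (uu h)"
          unfolding G_def Q_def using Q0 h x y mon_val[OF x y, of "Suc a" "Suc b"] hpoly_val[OF h]
          by (simp add: algebra_simps) (simp add: add_divide_distrib algebra_simps)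
      qed
      ultimately show "\<exists>Q. deg_le Q (Dm (a + (b+2))) \<and> (\<forall>h t. h > 0 \<longrightarrow> XX h t = s1 * uu h \<longrightarrow> YY h t = s2 * (uu h)^2 \<longrightarrow>
          G h t = (real (Suc b) / real m) * h * R0 h + poly Q (uu h))" by blast
    qed
  qed
  ultimately show ?thesis unfolding Lprop_def by blast
qed


lemma L_step_a:
  assumes "Lprop a b" shows "Lprop (a+2) b"
proof -
  from assms obtain c0 G0 where c0: "odd (a+b) \<longrightarrow> c0 = 0"
    and d0: "\<forall>h t. h \<ge> 0 \<longrightarrow> ((G0 h) has_real_derivative (XX h t ^ a * YY h t ^ b - c0 * h ^ ((a+b) div 2))) (at t)"
    and g0: "good (a+b) G0" unfolding Lprop_def by blast
  define m where "m = a + b + 2"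
  define G where "G = (\<lambda>h t. (real (Suc a) / real m) * h * G0 h t - (XX h t ^ Suc a * YY h t ^ Suc b) / real m)"
  define c where "c = real (Suc a) * c0 / real m"
  have "odd ((a+2) + b) \<longrightarrow> c = 0" using c0 by (auto simp: c_def)
  moreover have "\<forall>h t. h \<ge> 0 \<longrightarrow> ((G h) has_real_derivative (XX h t ^ (a+2) * YY h t ^ b - c * h ^ (((a+2)+b) div 2))) (at t)"
  proof (intro allI impI)
    fix h t :: real assume h: "h \<ge> 0"
    have D: "((G h) has_real_derivative (real (Suc a) / real m) * h * (XX h t ^ a * YY h t ^ b - c0 * h ^ ((a+b) div 2)) - (real (Suc a) * XX h t ^ a * YY h t ^ (b+2) - real (Suc b) * XX h t ^ (a+2) * YY h t ^ b) / real m) (at t)"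
      unfolding G_def using d0 h by (intro DERIV_diff DERIV_cdivide DERIV_cmult mon_deriv) auto
    have y2: "YY h t ^ 2 = h - XX h t ^ 2" using XY_circ[OF h, of t] by linarith
    have e1: "real (Suc a) * XX h t ^ a * YY h t ^ (b+2) = real (Suc a) * ((XX h t ^ a * YY h t ^ b) * (h - XX h t ^ 2))"
    proof -
      have "XX h t ^ a * YY h t ^ (b+2) = (XX h t ^ a * YY h t ^ b) * YY h t ^ 2" by (simp only: power_add mult_ac)
      then show ?thesis unfolding y2 by (simp add: mult.assoc)
    qed
    have e2: "real (Suc b) * XX h t ^ (a+2) * YY h t ^ b = real (Suc b) * ((XX h t ^ a * YY h t ^ b) * XX h t ^ 2)"
      by (simp only: power_add mult_ac)
    have e3: "XX h t ^ (a+2) * YY h t ^ b = (XX h t ^ a * YY h t ^ b) * XX h t ^ 2"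
      by (simp only: power_add mult_ac)
    have hp: "h ^ (((a+2) + b) div 2) = h * h ^ ((a+b) div 2)"
      by (simp add: power_Suc[symmetric] del: power_Suc)
    show "((G h) has_real_derivative (XX h t ^ (a+2) * YY h t ^ b - c * h ^ (((a+2)+b) div 2))) (at t)"
    proof -
      have D': "((G h) has_real_derivative (real (Suc a) / real m) * h * (XX h t ^ a * YY h t ^ b - c0 * h ^ ((a+b) div 2)) - (real (Suc a) * ((XX h t ^ a * YY h t ^ b) * (h - XX h t ^ 2)) - real (Suc b) * ((XX h t ^ a * YY h t ^ b) * XX h t ^ 2)) / real m) (at t)"
        using D unfolding e1 e2 .
      have eq: "(real (Suc a) / real m) * h * (XX h t ^ a * YY h t ^ b - c0 * h ^ ((a+b) div 2)) - (real (Suc a) * ((XX h t ^ a * YY h t ^ b) * (h - XX h t ^ 2)) - real (Suc b) * ((XX h t ^ a * YY h t ^ b) * XX h t ^ 2)) / real m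
         = (XX h t ^ a * YY h t ^ b) * XX h t ^ 2 - (real (Suc a) * c0 / real m) * (h * h ^ ((a+b) div 2))"
        by (rule alg_z2) (simp add: m_def)
      show ?thesis unfolding e3 hp c_def using D' unfolding eq .
    qed
  qed
  moreover have "good ((a+2) + b) G"
  proof -
    from g0 obtain R0 where R0: "\<forall>s1 s2. (s1 = 1 \<or> s1 = -1) \<longrightarrow> (s2 = 1 \<or> s2 = -1) \<longrightarrow>
      (\<exists>Q. deg_le Q (Dm (a+b)) \<and> (\<forall>h t. h > 0 \<longrightarrow> XX h t = s1 * uu h \<longrightarrow> YY h t = s2 * (uu h)^2 \<longrightarrow>
      G0 h t = R0 h + poly Q (uu h)))" unfolding good_def by blast
    show ?thesis unfolding good_def
    proof (intro exI[of _ "\<lambda>h. (real (Suc a) / real m) * h * R0 h"] allI impI)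
      fix s1 s2 :: real assume s1: "s1 = 1 \<or> s1 = -1" and s2: "s2 = 1 \<or> s2 = -1"
      from R0 s1 s2 obtain Q0 where Q0d: "deg_le Q0 (Dm (a+b))" and
        Q0: "\<forall>h t. h > 0 \<longrightarrow> XX h t = s1 * uu h \<longrightarrow> YY h t = s2 * (uu h)^2 \<longrightarrow> G0 h t = R0 h + poly Q0 (uu h)"
        by blast
      define Q where "Q = smult (real (Suc a) / real m) (hpoly * Q0) - smult (1 / real m) (monom (s1^Suc a * s2^Suc b) (Suc a + 2 * Suc b))"
      have "deg_le Q (Dm ((a+2) + b))" unfolding Q_def
        apply (intro deg_le_diff deg_le_smult deg_le_monom)
        using deg_le_mult[OF hpoly_deg Q0d] Dm_step[of "a+b"] apply (simp add: add.commute add.left_commute)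
        apply (simp add: Dm_def)
        done
      moreover have "\<forall>h t. h > 0 \<longrightarrow> XX h t = s1 * uu h \<longrightarrow> YY h t = s2 * (uu h)^2 \<longrightarrow>
          G h t = (real (Suc a) / real m) * h * R0 h + poly Q (uu h)"
      proof (intro allI impI)
        fix h t :: real assume h: "h > 0" and x: "XX h t = s1 * uu h" and y: "YY h t = s2 * (uu h)^2"
        show "G h t = (real (Suc a) / real m) * h * R0 h + poly Q (uu h)"
          unfolding G_def Q_def using Q0 h x y mon_val[OF x y, of "Suc a" "Suc b"] hpoly_val[OF h]
          by (simp add: algebra_simps) (simp add: add_divide_distrib algebra_simps)
      qed
      ultimately show "\<exists>Q. deg_le Q (Dm ((a+2) + b)) \<and> (\<forall>h t. h > 0 \<longrightarrow> XX h t = s1 * uu h \<longrightarrow> YY h t = s2 * (uu h)^2 \<longrightarrow>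
          G h t = (real (Suc a) / real m) * h * R0 h + poly Q (uu h))" by blast
    qed
  qed
  ultimately show ?thesis unfolding Lprop_def by blast
qed

lemma L_all: "Lprop a b"
proof (induction "a + b" arbitrary: a b rule: less_induct)
  case less
  show ?case
  proof (cases "b \<ge> 2")
    case True
    then obtain b' where b: "b = b' + 2" by (metis add.commute le_Suc_ex)
    show ?thesis unfolding b by (rule L_step_b, rule less) (simp add: b)
  next
    case nb: False
    show ?thesis
    proof (cases "a \<ge> 2")
      case True
      then obtain a' where a: "a = a' + 2" by (metis add.commute le_Suc_ex)
      show ?thesis unfolding a by (rule L_step_a, rule less) (simp add: a)
    next
      case False
      then have "a = 0 \<or> a = 1" "b = 0 \<or> b = 1" using nb by auto
      then show ?thesis using L00 L01 L10 L11 by auto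
    qed
  qed
qed

lemma ftc:
  assumes "lo \<le> hi" "\<And>t. (F has_real_derivative f t) (at t)"
  shows "integral {lo..hi} f = F hi - F lo"
  apply (rule integral_unique, rule fundamental_theorem_of_calculus[OF assms(1)])
  using assms(2) by (auto simp: has_real_derivative_iff_has_vector_derivative[symmetric] intro: has_field_derivative_at_within)

lemma K0:
  fixes lo hi :: "real \<Rightarrow> real"
  assumes le: "\<And>h. h > 0 \<Longrightarrow> lo h \<le> hi h"
    and p1: "p1 = 1 \<or> p1 = -1" and p2: "p2 = 1 \<or> p2 = -1"
    and q1: "q1 = 1 \<or> q1 = -1" and q2: "q2 = 1 \<or> q2 = -1"
    and elo: "\<And>h. h > 0 \<Longrightarrow> XX h (lo h) = p1 * uu h \<and> YY h (lo h) = p2 * (uu h)^2"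
    and ehi: "\<And>h. h > 0 \<Longrightarrow> XX h (hi h) = q1 * uu h \<and> YY h (hi h) = q2 * (uu h)^2"
  shows "\<exists>c Q. (odd (a+b) \<longrightarrow> c = 0) \<and> deg_le Q (Dm (a+b)) \<and>
    (\<forall>h>0. integral {lo h..hi h} (\<lambda>t. XX h t ^ a * YY h t ^ b) = poly Q (uu h) + c * h ^ ((a+b) div 2) * (hi h - lo h))"
proof -
  obtain c G where c: "odd (a+b) \<longrightarrow> c = 0"
    and d: "\<forall>h t. h \<ge> 0 \<longrightarrow> ((G h) has_real_derivative (XX h t ^ a * YY h t ^ b - c * h ^ ((a+b) div 2))) (at t)"
    and g: "good (a+b) G" using L_all[of a b] unfolding Lprop_def by blast
  from g obtain R where R: "\<forall>s1 s2. (s1 = 1 \<or> s1 = -1) \<longrightarrow> (s2 = 1 \<or> s2 = -1) \<longrightarrow>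
   (\<exists>Q. deg_le Q (Dm (a+b)) \<and> (\<forall>h t. h > 0 \<longrightarrow> XX h t = s1 * uu h \<longrightarrow> YY h t = s2 * (uu h)^2 \<longrightarrow>
      G h t = R h + poly Q (uu h)))" unfolding good_def by blast
  from R p1 p2 obtain Ql where Qld: "deg_le Ql (Dm (a+b))" and Ql: "\<forall>h t. h > 0 \<longrightarrow> XX h t = p1 * uu h \<longrightarrow> YY h t = p2 * (uu h)^2 \<longrightarrow>
      G h t = R h + poly Ql (uu h)" by blast
  from R q1 q2 obtain Qh where Qhd: "deg_le Qh (Dm (a+b))" and Qh: "\<forall>h t. h > 0 \<longrightarrow> XX h t = q1 * uu h \<longrightarrow> YY h t = q2 * (uu h)^2 \<longrightarrow>
      G h t = R h + poly Qh (uu h)" by blast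
  have "\<forall>h>0. integral {lo h..hi h} (\<lambda>t. XX h t ^ a * YY h t ^ b) = poly (Qh - Ql) (uu h) + c * h ^ ((a+b) div 2) * (hi h - lo h)"
  proof (intro allI impI)
    fix h :: real assume h: "h > 0"
    have "integral {lo h..hi h} (\<lambda>t. XX h t ^ a * YY h t ^ b) =
       (G h (hi h) + c * h ^ ((a+b) div 2) * hi h) - (G h (lo h) + c * h ^ ((a+b) div 2) * lo h)"
    proof (rule ftc[OF le[OF h]])
      fix t
      show "((\<lambda>t. G h t + c * h ^ ((a+b) div 2) * t) has_real_derivative XX h t ^ a * YY h t ^ b) (at t)"
        using DERIV_add[OF d[rule_format, of h t] DERIV_cmult[OF DERIV_ident, of "c * h ^ ((a+b) div 2)"]] h by simp
    qed
    also have "\<dots> = poly (Qh - Ql) (uu h) + c * h ^ ((a+b) div 2) * (hi h - lo h)"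
      using Ql[rule_format, OF h] Qh[rule_format, OF h] elo[OF h] ehi[OF h] by (simp add: algebra_simps)
    finally show "integral {lo h..hi h} (\<lambda>t. XX h t ^ a * YY h t ^ b) = poly (Qh - Ql) (uu h) + c * h ^ ((a+b) div 2) * (hi h - lo h)" .
  qed
  then show ?thesis using c deg_le_diff[OF Qhd Qld] by blast
qed

definition Bn :: "nat \<Rightarrow> int" where "Bn n = int (2 * n + (if even n then 2 else 1))"

definition Pn :: "nat \<Rightarrow> (real \<Rightarrow> real) \<Rightarrow> bool" where
"Pn n f \<longleftrightarrow> (\<exists>A Dl \<Phi>. deg_le A (int ((n - 1) div 2)) \<and> deg_le Dl (int ((n - 1) div 2)) \<and> deg_le \<Phi> (Bn n) \<and>
   (\<forall>h>0. f h = poly A h * Iint 0 1 h + poly Dl h * Jint 0 1 h + poly \<Phi> (uu h)))"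

lemma Pn_add: "Pn n f \<Longrightarrow> Pn n g \<Longrightarrow> Pn n (\<lambda>h. f h + g h)"
  unfolding Pn_def
proof (elim exE conjE)
  fix A1 D1 P1 A2 D2 P2
  assume "deg_le A1 (int ((n - 1) div 2))" "deg_le D1 (int ((n - 1) div 2))" "deg_le P1 (Bn n)"
    "\<forall>h>0. f h = poly A1 h * Iint 0 1 h + poly D1 h * Jint 0 1 h + poly P1 (uu h)"
    "deg_le A2 (int ((n - 1) div 2))" "deg_le D2 (int ((n - 1) div 2))" "deg_le P2 (Bn n)"
    "\<forall>h>0. g h = poly A2 h * Iint 0 1 h + poly D2 h * Jint 0 1 h + poly P2 (uu h)"
  then show "\<exists>A Dl \<Phi>. deg_le A (int ((n - 1) div 2)) \<and> deg_le Dl (int ((n - 1) div 2)) \<and> deg_le \<Phi> (Bn n) \<and>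
   (\<forall>h>0. f h + g h = poly A h * Iint 0 1 h + poly Dl h * Jint 0 1 h + poly \<Phi> (uu h))"
    by (intro exI[of _ "A1 + A2"] exI[of _ "D1 + D2"] exI[of _ "P1 + P2"]) (auto intro!: deg_le_add simp: algebra_simps)
qed

lemma Pn_smult: "Pn n f \<Longrightarrow> Pn n (\<lambda>h. r * f h)"
  unfolding Pn_def
proof (elim exE conjE)
  fix A1 D1 P1
  assume "deg_le A1 (int ((n - 1) div 2))" "deg_le D1 (int ((n - 1) div 2))" "deg_le P1 (Bn n)"
    "\<forall>h>0. f h = poly A1 h * Iint 0 1 h + poly D1 h * Jint 0 1 h + poly P1 (uu h)"
  then show "\<exists>A Dl \<Phi>. deg_le A (int ((n - 1) div 2)) \<and> deg_le Dl (int ((n - 1) div 2)) \<and> deg_le \<Phi> (Bn n) \<and>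
   (\<forall>h>0. r * f h = poly A h * Iint 0 1 h + poly Dl h * Jint 0 1 h + poly \<Phi> (uu h))"
    by (intro exI[of _ "smult r A1"] exI[of _ "smult r D1"] exI[of _ "smult r P1"]) (auto intro!: deg_le_smult simp: algebra_simps)
qed

lemma Pn_zero: "Pn n (\<lambda>h. 0)"
  unfolding Pn_def by (intro exI[of _ 0]) auto

lemma Pn_sum: "finite S \<Longrightarrow> (\<And>i. i \<in> S \<Longrightarrow> Pn n (f i)) \<Longrightarrow> Pn n (\<lambda>h. \<Sum>i\<in>S. f i h)"
proof (induction S rule: finite_induct)
  case empty then show ?case using Pn_zero by simp
next
  case (insert x F)
  then show ?case using Pn_add[of n "f x" "\<lambda>h. \<Sum>i\<in>F. f i h"] by simp
qed

lemma Pn_cong: "Pn n f \<Longrightarrow> (\<And>h. h > 0 \<Longrightarrow> g h = f h) \<Longrightarrow> Pn n g"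
  unfolding Pn_def by simp

lemma cw_XY: "cw h t = (XX h t, YY h t)" unfolding cw_def XX_def YY_def by simp

lemma I01_val: assumes h: "h > 0" shows "Iint 0 1 h = h * thA h - (uu h)^3"
proof -
  have "Iint 0 1 h = integral {- thA h..thA h} (\<lambda>t. YY h t ^ 2)"
    unfolding Iint_def arcAB_def arc_int_def cw_XY by (simp add: YY_def power2_eq_square)
  also have "\<dots> = (h * thA h + XX h (thA h) * YY h (thA h)) / 2 - (h * (- thA h) + XX h (- thA h) * YY h (- thA h)) / 2"
  proof (rule ftc)
    show "- thA h \<le> thA h" using thA_bounds[OF h] by simp
    fix t
    have "((\<lambda>t. (h * t + XX h t * YY h t) / 2) has_real_derivative (h * 1 + (YY h t * YY h t + (- XX h t) * XX h t)) / 2) (at t)"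
      by (intro DERIV_cdivide DERIV_add DERIV_cmult DERIV_ident DERIV_mult XX_deriv YY_deriv)
    moreover have "(h * 1 + (YY h t * YY h t + (- XX h t) * XX h t)) / 2 = YY h t ^ 2"
      using XY_circ[of h t] h by (simp add: power2_eq_square algebra_simps)
    ultimately show "((\<lambda>t. (h * t + XX h t * YY h t) / 2) has_real_derivative YY h t ^ 2) (at t)" by simp
  qed
  also have "\<dots> = h * thA h - (uu h)^3" using endpts[OF h] by (simp add: algebra_simps power2_eq_square power3_eq_cube) (simp add: field_simps)
  finally show ?thesis .
qed

lemma J01_val: assumes h: "h > 0" shows "Jint 0 1 h = h * (pi / 2 - thA h) + (uu h)^3"
proof -
  have "Jint 0 1 h = integral {thA h..pi - thA h} (\<lambda>t. YY h t ^ 2)"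
    unfolding Jint_def arcBC_def arc_int_def cw_XY by (simp add: YY_def power2_eq_square)
  also have "\<dots> = (h * (pi - thA h) + XX h (pi - thA h) * YY h (pi - thA h)) / 2 - (h * thA h + XX h (thA h) * YY h (thA h)) / 2"
  proof (rule ftc)
    show "thA h \<le> pi - thA h" using thA_bounds[OF h] by simp
    fix t
    have "((\<lambda>t. (h * t + XX h t * YY h t) / 2) has_real_derivative (h * 1 + (YY h t * YY h t + (- XX h t) * XX h t)) / 2) (at t)"
      by (intro DERIV_cdivide DERIV_add DERIV_cmult DERIV_ident DERIV_mult XX_deriv YY_deriv)
    moreover have "(h * 1 + (YY h t * YY h t + (- XX h t) * XX h t)) / 2 = YY h t ^ 2"
      using XY_circ[of h t] h by (simp add: power2_eq_square algebra_simps)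
    ultimately show "((\<lambda>t. (h * t + XX h t * YY h t) / 2) has_real_derivative YY h t ^ 2) (at t)" by simp
  qed
  also have "\<dots> = h * (pi / 2 - thA h) + (uu h)^3" using endpts[OF h] by (simp add: algebra_simps power2_eq_square power3_eq_cube) (simp add: field_simps)
  finally show ?thesis .
qed

lemma ar1: "1 \<le> m \<Longrightarrow> m \<le> n + 1 \<Longrightarrow> Dm m \<le> Bn n"
proof -
  assume a: "1 \<le> m" "m \<le> n + 1"
  have "odd m \<Longrightarrow> odd n \<Longrightarrow> m \<noteq> n + 1" by auto
  then show ?thesis using a unfolding Dm_def Bn_def by (cases "even m"; cases "even n") auto
qed

lemma ar2: "m = 2 * k + 2 \<Longrightarrow> m \<le> n + 1 \<Longrightarrow> int (4 * k + 3) \<le> Bn n \<and> int k \<le> int ((n - 1) div 2)"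
proof -
  assume a: "m = 2 * k + 2" "m \<le> n + 1"
  have "2 * k \<le> n - 1" using a by simp
  then have "(2 * k) div 2 \<le> (n - 1) div 2" by (rule div_le_mono)
  then have "k \<le> (n - 1) div 2" by simp
  moreover have "int (4 * k + 3) \<le> Bn n" using a unfolding Bn_def by auto
  ultimately show ?thesis by simp
qed

lemma deg_le_hpow: "deg_le (hpoly ^ k) (int (4 * k))"
  unfolding deg_le_def using degree_power_le[of hpoly k] by (simp add: hpoly_def)

lemma typeIJ:
  assumes m1: "1 \<le> a + b" and mn: "a + b \<le> n + 1" and c: "odd (a+b) \<longrightarrow> c = 0" and Qd: "deg_le Q (Dm (a+b))"
    and f: "(\<forall>h>0. f h = poly Q (uu h) + c * h ^ ((a+b) div 2) * (2 * thA h)) \<or>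
            (\<forall>h>0. f h = poly Q (uu h) + c * h ^ ((a+b) div 2) * (pi - 2 * thA h))"
  shows "Pn n f"
proof (cases "odd (a+b)")
  case True
  then have c0: "c = 0" using c by simp
  show ?thesis unfolding Pn_def
    by (rule exI[of _ 0], rule exI[of _ 0], rule exI[of _ Q]) (use f c0 Qd ar1[OF m1 mn] in \<open>auto intro: deg_le_mono\<close>)
next
  case False
  then have "even (a + b)" by simp
  then obtain j where j: "a + b = 2 * j" by (rule evenE)
  with m1 have "j \<ge> 1" by simp
  define k where "k = j - 1"
  have k: "a + b = 2 * k + 2" using j \<open>j \<ge> 1\<close> unfolding k_def by simp
  have hk: "\<And>h. h ^ ((a+b) div 2) = h * h ^ k" using k by simp
  have b2: "int (4 * k + 3) \<le> Bn n" "int k \<le> int ((n - 1) div 2)" using ar2[OF k mn] by auto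
  define P3 where "P3 = hpoly ^ k * monom 1 3"
  have P3d: "deg_le P3 (Bn n)" unfolding P3_def
    by (rule deg_le_mono[OF deg_le_mult[OF deg_le_hpow deg_le_monom[of 3 3 1]]]) (use b2 in auto)
  have P3v: "\<And>h. h > 0 \<Longrightarrow> poly P3 (uu h) = h ^ k * (uu h)^3"
    unfolding P3_def by (simp add: poly_monom hpoly_val poly_power)
  have Ad: "deg_le (smult (2 * c) (monom 1 k)) (int ((n - 1) div 2))"
    by (intro deg_le_smult deg_le_monom) (use b2 in auto)
  have Qd': "deg_le Q (Bn n)" using Qd ar1[OF m1 mn] by (auto intro: deg_le_mono)
  from f show ?thesis
  proof
    assume f: "\<forall>h>0. f h = poly Q (uu h) + c * h ^ ((a+b) div 2) * (2 * thA h)"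
    show ?thesis unfolding Pn_def
    proof (rule exI[of _ "smult (2 * c) (monom 1 k)"], rule exI[of _ 0], rule exI[of _ "Q + smult (2 * c) P3"], intro conjI allI impI)
      fix h :: real assume h: "h > 0"
      show "f h = poly (smult (2 * c) (monom 1 k)) h * Iint 0 1 h + poly 0 h * Jint 0 1 h + poly (Q + smult (2 * c) P3) (uu h)"
      proof -
        have e1: "f h = poly Q (uu h) + c * h ^ k * (2 * (h * thA h))" using f[rule_format, OF h] unfolding hk[of h] by (simp add: algebra_simps)
        have e2: "h * thA h = Iint 0 1 h + (uu h)^3" using I01_val[OF h] by simp
        show ?thesis unfolding e1 e2 using P3v[OF h] by (simp add: poly_monom algebra_simps)
      qed
    qed (use Ad Qd' P3d in \<open>auto intro!: deg_le_add deg_le_smult\<close>)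
  next
    assume f: "\<forall>h>0. f h = poly Q (uu h) + c * h ^ ((a+b) div 2) * (pi - 2 * thA h)"
    show ?thesis unfolding Pn_def
    proof (rule exI[of _ 0], rule exI[of _ "smult (2 * c) (monom 1 k)"], rule exI[of _ "Q - smult (2 * c) P3"], intro conjI allI impI)
      fix h :: real assume h: "h > 0"
      show "f h = poly 0 h * Iint 0 1 h + poly (smult (2 * c) (monom 1 k)) h * Jint 0 1 h + poly (Q - smult (2 * c) P3) (uu h)"
      proof -
        have e1: "f h = poly Q (uu h) + c * h ^ k * (h * (pi - 2 * thA h))" using f[rule_format, OF h] unfolding hk[of h] by (simp add: algebra_simps)
        have e2: "h * (pi - 2 * thA h) = 2 * (Jint 0 1 h - (uu h)^3)" using J01_val[OF h] by (simp add: algebra_simps)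
        show ?thesis unfolding e1 e2 using P3v[OF h] by (simp add: poly_monom algebra_simps)
      qed
    qed (use Ad Qd' P3d in \<open>auto intro!: deg_le_diff deg_le_smult\<close>)
  qed
qed

lemma thA_bounds2: "h > 0 \<Longrightarrow> 0 \<le> thA h \<and> thA h * 2 \<le> pi"
  using thA_bounds[of h] by auto

lemma TAB: "1 \<le> a + b \<Longrightarrow> a + b \<le> n + 1 \<Longrightarrow> Pn n (\<lambda>h. integral {- thA h..thA h} (\<lambda>t. XX h t ^ a * YY h t ^ b))"
proof -
  assume m1: "1 \<le> a + b" and mn: "a + b \<le> n + 1"
  have "\<exists>c Q. (odd (a+b) \<longrightarrow> c = 0) \<and> deg_le Q (Dm (a+b)) \<and>
    (\<forall>h>0. integral {- thA h..thA h} (\<lambda>t. XX h t ^ a * YY h t ^ b) = poly Q (uu h) + c * h ^ ((a+b) div 2) * (thA h - - thA h))"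
    by (rule K0[of "\<lambda>h. - thA h" "\<lambda>h. thA h" 1 1 1 "-1"]) (auto simp: endpts dest!: thA_bounds2)
  then obtain c Q where c: "odd (a+b) \<longrightarrow> c = 0" and Qd: "deg_le Q (Dm (a+b))" and
    eq: "\<forall>h>0. integral {- thA h..thA h} (\<lambda>t. XX h t ^ a * YY h t ^ b) = poly Q (uu h) + c * h ^ ((a+b) div 2) * (thA h - - thA h)" by blast
  show ?thesis by (rule typeIJ[OF m1 mn c Qd], rule disjI1) (use eq in simp)
qed

lemma TBC: "1 \<le> a + b \<Longrightarrow> a + b \<le> n + 1 \<Longrightarrow> Pn n (\<lambda>h. integral {thA h..pi - thA h} (\<lambda>t. XX h t ^ a * YY h t ^ b))"
proof -
  assume m1: "1 \<le> a + b" and mn: "a + b \<le> n + 1"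
  have "\<exists>c Q. (odd (a+b) \<longrightarrow> c = 0) \<and> deg_le Q (Dm (a+b)) \<and>
    (\<forall>h>0. integral {thA h..pi - thA h} (\<lambda>t. XX h t ^ a * YY h t ^ b) = poly Q (uu h) + c * h ^ ((a+b) div 2) * ((pi - thA h) - thA h))"
    by (rule K0[of "\<lambda>h. thA h" "\<lambda>h. pi - thA h" 1 "-1" "-1" "-1"]) (auto simp: endpts dest!: thA_bounds2)
  then obtain c Q where c: "odd (a+b) \<longrightarrow> c = 0" and Qd: "deg_le Q (Dm (a+b))" and
    eq: "\<forall>h>0. integral {thA h..pi - thA h} (\<lambda>t. XX h t ^ a * YY h t ^ b) = poly Q (uu h) + c * h ^ ((a+b) div 2) * ((pi - thA h) - thA h)" by blast
  show ?thesis by (rule typeIJ[OF m1 mn c Qd], rule disjI2) (use eq in simp)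
qed

lemma TCD: "1 \<le> a + b \<Longrightarrow> a + b \<le> n + 1 \<Longrightarrow> Pn n (\<lambda>h. integral {pi - thA h..pi + thA h} (\<lambda>t. XX h t ^ a * YY h t ^ b))"
proof -
  assume m1: "1 \<le> a + b" and mn: "a + b \<le> n + 1"
  have "\<exists>c Q. (odd (a+b) \<longrightarrow> c = 0) \<and> deg_le Q (Dm (a+b)) \<and>
    (\<forall>h>0. integral {pi - thA h..pi + thA h} (\<lambda>t. XX h t ^ a * YY h t ^ b) = poly Q (uu h) + c * h ^ ((a+b) div 2) * ((pi + thA h) - (pi - thA h)))"
    by (rule K0[of "\<lambda>h. pi - thA h" "\<lambda>h. pi + thA h" "-1" "-1" "-1" 1]) (auto simp: endpts dest!: thA_bounds2)
  then obtain c Q where c: "odd (a+b) \<longrightarrow> c = 0" and Qd: "deg_le Q (Dm (a+b))" and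
    eq: "\<forall>h>0. integral {pi - thA h..pi + thA h} (\<lambda>t. XX h t ^ a * YY h t ^ b) = poly Q (uu h) + c * h ^ ((a+b) div 2) * ((pi + thA h) - (pi - thA h))" by blast
  show ?thesis by (rule typeIJ[OF m1 mn c Qd], rule disjI1) (use eq in simp)
qed

lemma TDA: "1 \<le> a + b \<Longrightarrow> a + b \<le> n + 1 \<Longrightarrow> Pn n (\<lambda>h. integral {pi + thA h..2 * pi - thA h} (\<lambda>t. XX h t ^ a * YY h t ^ b))"
proof -
  assume m1: "1 \<le> a + b" and mn: "a + b \<le> n + 1"
  have "\<exists>c Q. (odd (a+b) \<longrightarrow> c = 0) \<and> deg_le Q (Dm (a+b)) \<and>
    (\<forall>h>0. integral {pi + thA h..2 * pi - thA h} (\<lambda>t. XX h t ^ a * YY h t ^ b) = poly Q (uu h) + c * h ^ ((a+b) div 2) * ((2 * pi - thA h) - (pi + thA h)))"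
    by (rule K0[of "\<lambda>h. pi + thA h" "\<lambda>h. 2 * pi - thA h" "-1" 1 1 1]) (auto simp: endpts dest!: thA_bounds2)
  then obtain c Q where c: "odd (a+b) \<longrightarrow> c = 0" and Qd: "deg_le Q (Dm (a+b))" and
    eq: "\<forall>h>0. integral {pi + thA h..2 * pi - thA h} (\<lambda>t. XX h t ^ a * YY h t ^ b) = poly Q (uu h) + c * h ^ ((a+b) div 2) * ((2 * pi - thA h) - (pi + thA h))" by blast
  show ?thesis by (rule typeIJ[OF m1 mn c Qd], rule disjI2) (use eq in simp)
qed

lemma finS: "finite {(i::nat, j::nat). i + j \<le> n}"
  by (rule finite_subset[of _ "{..n} \<times> {..n}"]) auto

lemma int_lin2:
  "integral {lo..hi} (\<lambda>t. c * (XX h t ^ i * YY h t ^ j) + d * (XX h t ^ k * YY h t ^ l))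
   = c * integral {lo..hi} (\<lambda>t. XX h t ^ i * YY h t ^ j) + d * integral {lo..hi} (\<lambda>t. XX h t ^ k * YY h t ^ l)"
proof -
  have c1: "continuous_on {lo..hi} (\<lambda>t. XX h t ^ i * YY h t ^ j)" "continuous_on {lo..hi} (\<lambda>t. XX h t ^ k * YY h t ^ l)"
    unfolding XX_def YY_def by (intro continuous_intros)+
  have i1: "(\<lambda>t. c * (XX h t ^ i * YY h t ^ j)) integrable_on {lo..hi}"
    by (intro integrable_continuous_interval continuous_on_mult_left c1)
  have i2: "(\<lambda>t. d * (XX h t ^ k * YY h t ^ l)) integrable_on {lo..hi}"
    by (intro integrable_continuous_interval continuous_on_mult_left c1)
  show ?thesis by (simp add: integral_add[OF i1 i2])
qed

lemma arc_expand:
  "arc_int h lo hi (\<lambda>x y. bipoly n B x y) (\<lambda>x y. - bipoly n A x y) =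
   (\<Sum>(i,j)\<in>{(i,j). i + j \<le> n}. B i j * integral {lo..hi} (\<lambda>t. XX h t ^ i * YY h t ^ (j+1))
       + A i j * integral {lo..hi} (\<lambda>t. XX h t ^ (i+1) * YY h t ^ j))"
proof -
  have "arc_int h lo hi (\<lambda>x y. bipoly n B x y) (\<lambda>x y. - bipoly n A x y) =
    integral {lo..hi} (\<lambda>t. \<Sum>(i,j)\<in>{(i,j). i + j \<le> n}. B i j * (XX h t ^ i * YY h t ^ (j+1))
       + A i j * (XX h t ^ (i+1) * YY h t ^ j))"
  proof -
    have "\<And>t. bipoly n B (XX h t) (YY h t) * (- (sqrt h * sin t)) + - bipoly n A (XX h t) (YY h t) * (- (sqrt h * cos t))
       = (\<Sum>(i,j)\<in>{(i,j). i + j \<le> n}. B i j * (XX h t ^ i * YY h t ^ (j+1)) + A i j * (XX h t ^ (i+1) * YY h t ^ j))"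
    proof -
      fix t
      have y: "- (sqrt h * sin t) = YY h t" and x: "sqrt h * cos t = XX h t" by (simp_all add: XX_def YY_def)
      have "bipoly n B (XX h t) (YY h t) * YY h t + - bipoly n A (XX h t) (YY h t) * (- XX h t)
         = (\<Sum>(i,j)\<in>{(i,j). i + j \<le> n}. B i j * XX h t ^ i * YY h t ^ j * YY h t)
         + (\<Sum>(i,j)\<in>{(i,j). i + j \<le> n}. A i j * XX h t ^ i * YY h t ^ j * XX h t)"
        unfolding bipoly_def by (simp only: sum_distrib_right case_prod_unfold mult_minus_left mult_minus_right minus_minus)
      also have "\<dots> = (\<Sum>(i,j)\<in>{(i,j). i + j \<le> n}. B i j * (XX h t ^ i * YY h t ^ (j+1)) + A i j * (XX h t ^ (i+1) * YY h t ^ j))"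
        unfolding sum.distrib[symmetric] by (rule sum.cong[OF refl]) (auto simp: mult_ac)
      finally show "?thesis t" unfolding x y .
    qed
    then show ?thesis unfolding arc_int_def cw_XY by simp
  qed
  also have "\<dots> = (\<Sum>(i,j)\<in>{(i,j). i + j \<le> n}. integral {lo..hi} (\<lambda>t. B i j * (XX h t ^ i * YY h t ^ (j+1))
       + A i j * (XX h t ^ (i+1) * YY h t ^ j)))"
    by (subst integral_sum[OF finS]) (auto simp: case_prod_unfold XX_def YY_def intro!: integrable_continuous_interval continuous_intros)
  also have "\<dots> = (\<Sum>(i,j)\<in>{(i,j). i + j \<le> n}. B i j * integral {lo..hi} (\<lambda>t. XX h t ^ i * YY h t ^ (j+1))
       + A i j * integral {lo..hi} (\<lambda>t. XX h t ^ (i+1) * YY h t ^ j))"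
    by (rule sum.cong[OF refl]) (simp only: case_prod_unfold int_lin2)
  finally show ?thesis .
qed

lemma Parc:
  assumes T: "\<And>a b. 1 \<le> a + b \<Longrightarrow> a + b \<le> n + 1 \<Longrightarrow> Pn n (\<lambda>h. integral {lo h..hi h} (\<lambda>t. XX h t ^ a * YY h t ^ b))"
  shows "Pn n (\<lambda>h. \<Sum>(i,j)\<in>{(i,j). i + j \<le> n}. B i j * integral {lo h..hi h} (\<lambda>t. XX h t ^ i * YY h t ^ (j+1))
       + A i j * integral {lo h..hi h} (\<lambda>t. XX h t ^ (i+1) * YY h t ^ j))"
proof (rule Pn_sum[OF finS])
  fix p assume "p \<in> {(i, j). i + j \<le> n}"
  then obtain i j where p: "p = (i,j)" and ij: "i + j \<le> n" by auto
  show "Pn n (\<lambda>h. case p of (i,j) \<Rightarrow> B i j * integral {lo h..hi h} (\<lambda>t. XX h t ^ i * YY h t ^ (j+1))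
       + A i j * integral {lo h..hi h} (\<lambda>t. XX h t ^ (i+1) * YY h t ^ j))"
    unfolding p prod.case by (intro Pn_add Pn_smult T) (use ij in auto)
qed

lemma P_M: "Pn n (Mfun n a b)"
proof -
  have "Pn n (\<lambda>h. ((arcAB h (\<lambda>x y. bipoly n (b 1) x y) (\<lambda>x y. - bipoly n (a 1) x y)
   + arcBC h (\<lambda>x y. bipoly n (b 2) x y) (\<lambda>x y. - bipoly n (a 2) x y))
   + arcCD h (\<lambda>x y. bipoly n (b 3) x y) (\<lambda>x y. - bipoly n (a 3) x y))
   + arcDA h (\<lambda>x y. bipoly n (b 4) x y) (\<lambda>x y. - bipoly n (a 4) x y))"
    unfolding arcAB_def arcBC_def arcCD_def arcDA_def arc_expand
    by (intro Pn_add Parc TAB TBC TCD TDA)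
  then show ?thesis unfolding Mfun_def[abs_def] by simp
qed

theorem lemma2p3:
  fixes n :: nat and a b :: "nat \<Rightarrow> nat \<Rightarrow> nat \<Rightarrow> real"
  assumes "n \<ge> 1"
  shows "\<exists>\<alpha> \<beta> \<gamma> \<delta> \<phi> :: real poly.
     deg_le \<alpha> \<lfloor>(real n - 1) / 2\<rfloor> \<and> deg_le \<delta> \<lfloor>(real n - 1) / 2\<rfloor> \<and>
     deg_le \<beta> \<lfloor>(real n - 2) / 2\<rfloor> \<and> deg_le \<gamma> \<lfloor>real n / 2\<rfloor> \<and>
     deg_le \<phi> \<lfloor>2 * real n + (3 + (-1) ^ n) / 2\<rfloor> \<and>
     (\<forall>h>0. Mfun n a b h =
        poly \<alpha> h * Iint 0 1 h + poly \<beta> h * Iint 1 1 h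
      + poly \<gamma> h * Jint 0 0 h + poly \<delta> h * Jint 0 1 h + poly \<phi> (uu h))"
proof -
  obtain A Dl \<Phi> where Ad: "deg_le A (int ((n - 1) div 2))" and Dd: "deg_le Dl (int ((n - 1) div 2))"
    and Pd: "deg_le \<Phi> (Bn n)" and eq: "\<forall>h>0. Mfun n a b h = poly A h * Iint 0 1 h + poly Dl h * Jint 0 1 h + poly \<Phi> (uu h)"
    using P_M[of n a b] unfolding Pn_def by blast
  have f1: "int ((n - 1) div 2) \<le> \<lfloor>(real n - 1) / 2\<rfloor>"
  proof -
    have "2 * ((n - 1) div 2) \<le> n - 1" by simp
    then have "real (2 * ((n - 1) div 2)) \<le> real (n - 1)" by (rule of_nat_mono)
    then have "real ((n - 1) div 2) \<le> (real n - 1) / 2" using assms by (simp add: of_nat_diff)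
    then show ?thesis by (simp add: le_floor_iff)
  qed
  have f2: "Bn n \<le> \<lfloor>2 * real n + (3 + (-1) ^ n) / 2\<rfloor>"
  proof (cases "even n")
    case True
    then have "(-1::real) ^ n = 1" by simp
    then show ?thesis using True unfolding Bn_def by (simp add: le_floor_iff)
  next
    case False
    then have "(-1::real) ^ n = -1" by simp
    then show ?thesis using False unfolding Bn_def by (simp add: le_floor_iff)
  qed
  show ?thesis
    apply (rule exI[of _ A], rule exI[of _ 0], rule exI[of _ 0], rule exI[of _ Dl], rule exI[of _ \<Phi>])
    using deg_le_mono[OF Ad f1] deg_le_mono[OF Dd f1] deg_le_mono[OF Pd f2] eq by simp
qed

end
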